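(* Let $k\ge 1$, $N\ge 3$ and $a\ge 2$ be integers, and let $v=v_2$. (i) $$\frac{(k2^N+2a-3)!!}{(k2^N+1)!!}\equiv\begin{cases}(2a-3)!! \pmod{2^{N+1+\min\{v(a),\,N-1\}}}, & \text{if } 2\mid a,\\ (2a-3)!!+k2^N \pmod{2^{N+1}}, & \text{if } 2\nmid a.\end{cases}$$ (ii) $$(k2^N+2a-3)!!\equiv\begin{cases}(2a-3)!! \pmod{2^{N+1}}, & \text{if } 2\mid a,\\ (2a-3)!!+k2^N \pmod{2^{N+1}}, & \text{if } 2\nmid a.\end{cases}$$ (iii) If $k$ is odd, then $$(k2^N-3)!!\equiv\begin{cases}-1+(-1)^{\frac{k-1}{2}}2^{N+1}\pmod{2^{N+3}}, & \text{if } N=3,\\ -1+(-1)^{\frac{k+1}{2}}2^{N+1}\pmod{2^{N+3}}, & \text{if } N\ge 4.\end{cases}$$ In particular $(k2^N-3)!!\equiv -1+2^{N+1}\pmod{2^{N+2}}$.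
   Context: For a positive odd integer $b$, $b!!=b(b-2)\cdots3\cdot1$. $v_2$ denotes the $2$-adic valuation. *)

theory Defs
  imports "HOL-Number_Theory.Number_Theory"
begin

fun dfact :: "nat \<Rightarrow> nat" where
  "dfact 0 = 1"
| "dfact (Suc 0) = 1"
| "dfact (Suc (Suc n)) = Suc (Suc n) * dfact n"

end

theory Submission imports Defs begin

definition R :: "int \<Rightarrow> nat \<Rightarrow> int" where "R s n = (\<Prod>i<n. s + 2*int i + 1)"

lemma R_0[simp]: "R s 0 = 1" by (simp add: R_def)
lemma R_Suc: "R s (Suc n) = R s n * (s + 2*int n + 1)" by (simp add: R_def)
lemma R_add: "R s (n+m) = R s n * R (s + 2*int n) m"
  by (induction m) (simp_all add: R_Suc algebra_simps)
lemma R_SS: "R x (Suc (Suc n)) = ((x+1) * (x + 2*int n + 3)) * R (x+2) n"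
proof -
  have "R x (Suc (Suc n)) = R x (1 + (n + 1))" by simp
  also have "\<dots> = R x 1 * (R (x+2) n * (x + 2 + 2*int n + 1))"
    by (simp only: R_add R_Suc) (simp add: R_Suc)
  finally show ?thesis by (simp add: R_Suc algebra_simps)
qed

lemma dfact_pos: "dfact n > 0" by (induction n rule: dfact.induct) auto

lemma dfact_R: "int (dfact (2*n+1)) = R 0 (Suc n)"
proof (induction n)
  case 0 then show ?case by (simp add: R_Suc)
next
  case (Suc n)
  have "2*Suc n + 1 = Suc (Suc (2*n+1))" by simp
  then have "dfact (2*Suc n + 1) = (2*n+3) * dfact (2*n+1)" by (simp add: algebra_simps)
  then show ?case using Suc by (simp add: R_Suc algebra_simps)
qed

lemma R_odd: "even s \<Longrightarrow> odd (R s n)"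
  by (induction n) (simp_all add: R_Suc)

lemma R_pair: "[R (s+t) (2*b) = R s (2*b)] (mod t*(t+2*s+4*int b))"
proof (induction b arbitrary: s)
  case 0 then show ?case by simp
next
  case (Suc b)
  have IH: "[R (s+2+t) (2*b) = R (s+2) (2*b)] (mod t*(t+2*s+4*int (Suc b)))"
    using Suc[of "s+2"] by (simp add: algebra_simps)
  have e: "(s+t+1) * (s+t + 2*int (2*b) + 3) = (s+1)*(s + 2*int(2*b) + 3) + t*(t+2*s+4*int (Suc b))"
    by (simp add: algebra_simps)
  have c1: "[(s+t+1) * (s+t + 2*int (2*b) + 3) = (s+1)*(s + 2*int(2*b) + 3)] (mod t*(t+2*s+4*int (Suc b)))"
    unfolding e cong_iff_dvd_diff by simp
  have "2 * Suc b = Suc (Suc (2*b))" by simp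
  then show ?case using cong_mult[OF c1 IH]
    by (simp only: R_SS) (simp add: algebra_simps)
qed

lemma pw: "(2::int)^(j+1) * (2^(j+1) + 2^(j+1)) = 2^(2*j+3)"
proof -
  have e: "(j+1)+(j+2) = 2*j+3" by simp
  have "(2::int)^(j+1) * (2^(j+1) + 2^(j+1)) = (2::int)^(j+1) * 2^(j+2)" by simp
  also have "\<dots> = 2^((j+1)+(j+2))" by (simp only: power_add)
  also have "\<dots> = 2^(2*j+3)" by (simp only: e)
  finally show ?thesis .
qed

lemma e_step:
  assumes "j \<ge> 1"
  shows "[R 0 (2^(j+1)) = (R 0 (2^j))^2] (mod 2^(2*j+3))"
proof -
  define b where "b = (2::nat)^(j-1)"
  have b: "2^j = 2*b" unfolding b_def using assms by (metis Suc_diff_le diff_Suc_1 power_Suc)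
  have h4: "4 * int b = 2^(j+1)"
  proof -
    have "int (2^j) = int (2*b)" using b by simp
    then show ?thesis by simp
  qed
  have "R 0 (2^(j+1)) = R 0 (2^j + 2^j)" by (simp add: mult_2)
  also have "\<dots> = R 0 (2^j) * R (0 + 2^(j+1)) (2*b)" 
    unfolding R_add using h4 by (simp add: b)
  finally have 1: "R 0 (2^(j+1)) = R 0 (2^j) * R (0 + 2^(j+1)) (2*b)" .
  have "[R (0 + 2^(j+1)) (2*b) = R 0 (2*b)] (mod 2^(j+1) * (2^(j+1) + 2*0 + 4 * int b))"
    by (rule R_pair)
  moreover note h4
  moreover have "(2::int)^(j+1) * (2^(j+1) + 2^(j+1)) = 2^(2*j+3)"
    by (rule pw)
  ultimately have "[R (0 + 2^(j+1)) (2*b) = R 0 (2*b)] (mod 2^(2*j+3))" by simp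
  then have "[R 0 (2^j) * R (0 + 2^(j+1)) (2*b) = R 0 (2^j) * R 0 (2^j)] (mod 2^(2*j+3))"
    using b by (simp add: cong_scalar_left)
  then show ?thesis using 1 by (simp add: power2_eq_square)
qed

lemma R04: "R 0 4 = 105" by (simp add: numeral_eq_Suc R_Suc)
lemma R08: "R 0 8 = 2027025" by (simp add: numeral_eq_Suc R_Suc)

lemma sq_step:
  fixes E :: int
  assumes "[E = 1 + 2^(m+4)] (mod 2^(m+7))"
  shows "[E^2 = 1 + 2^(m+5)] (mod 2^(m+8))"
proof -
  obtain q where q: "E = 1 + 2^(m+4) + 2^(m+7)*q"
    using assms unfolding cong_iff_lin by (metis cong_iff_lin cong_sym)
  have "E^2 - (1 + 2^(m+5)) = 2^(m+8) * (2^m + 2^(m+6)*q^2 + q + 2^(m+4)*q)"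
    unfolding q by (simp add: algebra_simps power2_eq_square power_add)
  then show ?thesis unfolding cong_iff_dvd_diff by simp
qed

lemma e_val:
  assumes "j \<ge> 3"
  shows "[R 0 (2^j) = 1 + 2^(j+1)] (mod 2^(j+4))"
  using assms
proof (induction j rule: dec_induct)
  case base
  show ?case unfolding cong_iff_dvd_diff by (simp add: R08)
next
  case (step n)
  obtain m where m: "n = m + 3" using step(1) by (metis add.commute le_Suc_ex)
  have c1: "[(R 0 (2^n))^2 = 1 + 2^(n+2)] (mod 2^(n+5))"
    using sq_step[of "R 0 (2^n)" m] step(3) unfolding m by (simp add: add.commute)
  have dv: "(2::int)^(n+5) dvd 2^(2*n+3)" by (rule le_imp_power_dvd) (use step(1) in simp)
  have c2: "[R 0 (2^(n+1)) = (R 0 (2^n))^2] (mod 2^(n+5))"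
    by (rule cong_dvd_modulus[OF e_step[of n] dv]) (use step(1) in simp)
  have "[R 0 (2^(n+1)) = 1 + 2^(n+2)] (mod 2^(n+5))" by (rule cong_trans[OF c2 c1])
  then show ?case by (simp add: add.commute)
qed

definition cc :: "nat \<Rightarrow> int" where "cc N = (if N = 3 then 5 else 1)"

lemma E_N:
  assumes "N \<ge> 3"
  shows "[R 0 (2^(N-1)) = 1 + cc N * 2^N] (mod 2^(N+3))"
proof (cases "N = 3")
  case True then show ?thesis unfolding cong_iff_dvd_diff by (simp add: R04 cc_def)
next
  case False
  then have "N - 1 \<ge> 3" using assms by simp
  from e_val[OF this] False assms show ?thesis by (simp add: cc_def add.commute)
qed

lemma D_N:
  assumes "N \<ge> 3"
  shows "[R 0 (k*2^(N-1)) = 1 + int k * cc N * 2^N] (mod 2^(N+3))"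
proof (induction k)
  case 0 then show ?case by simp
next
  case (Suc k)
  obtain n where n: "N = n + 3" using assms by (metis add.commute le_Suc_ex)
  have H: "(2::nat)^(N-1) = 2 * 2^(n+1)" unfolding n by simp
  have "R 0 (Suc k * 2^(N-1)) = R 0 (k*2^(N-1) + 2^(N-1))" by (simp add: algebra_simps)
  also have "\<dots> = R 0 (k*2^(N-1)) * R (0 + int k * 2^N) (2 * 2^(n+1))"
    unfolding R_add H by (simp add: n algebra_simps power_add)
  finally have 1: "R 0 (Suc k * 2^(N-1)) = R 0 (k*2^(N-1)) * R (0 + int k * 2^N) (2 * 2^(n+1))" .
  have p: "[R (0 + int k * 2^N) (2 * 2^(n+1)) = R 0 (2 * 2^(n+1))] 
     (mod (int k * 2^N) * (int k * 2^N + 2*0 + 4 * int (2^(n+1))))" by (rule R_pair)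
  have "(int k * 2^N + 2*0 + 4 * int (2^(n+1))) = (int k + 1) * 2^N"
    unfolding n by (simp add: algebra_simps power_add)
  then have "(int k * 2^N) * (int k * 2^N + 2*0 + 4 * int (2^(n+1))) = (int k * (int k + 1) * 2^n) * 2^(N+3)"
    unfolding n by (simp add: algebra_simps power_add)
  then have p2: "[R (0 + int k * 2^N) (2 * 2^(n+1)) = R 0 (2 * 2^(n+1))] (mod 2^(N+3))"
    using p cong_dvd_modulus by (metis dvd_triv_right)
  have eqH: "R 0 (2 * 2^(n+1)) = R 0 (2^(N-1))" using H by simp
  have p3: "[R (0 + int k * 2^N) (2 * 2^(n+1)) = 1 + cc N * 2^N] (mod 2^(N+3))"
    by (rule cong_trans[OF p2[unfolded eqH] E_N[OF assms]])
  have 2: "[R 0 (Suc k * 2^(N-1)) = (1 + int k * cc N * 2^N) * (1 + cc N * 2^N)] (mod 2^(N+3))"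
    unfolding 1 by (rule cong_mult[OF Suc p3])
  have "(1 + int k * cc N * 2^N) * (1 + cc N * 2^N) - (1 + int (Suc k) * cc N * 2^N)
      = 2^(N+3) * (int k * cc N * cc N * 2^n)"
    unfolding n by (simp add: algebra_simps power_add)
  then have "[(1 + int k * cc N * 2^N) * (1 + cc N * 2^N) = 1 + int (Suc k) * cc N * 2^N] (mod 2^(N+3))"
    unfolding cong_iff_dvd_diff by simp
  then show ?case by (rule cong_trans[OF 2])
qed

lemma cc_odd: "odd (cc N)" by (simp add: cc_def)

lemma multi_dvd:
  fixes a N :: nat
  assumes "a \<ge> 2" "N \<ge> 1"
  shows "(2::int)^(min (multiplicity (2::nat) a) (N - 1) + 1) dvd 2 * int a"
proof -
  have "(2::nat)^(multiplicity 2 a) dvd a" by (rule multiplicity_dvd)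
  then have "(2::int)^(multiplicity 2 a) dvd int a" by (metis of_nat_dvd_iff of_nat_numeral of_nat_power)
  then have "(2::int)^(multiplicity 2 a + 1) dvd 2 * int a" by (simp add: mult_dvd_mono)
  moreover have "(2::int)^(min (multiplicity (2::nat) a) (N - 1) + 1) dvd 2^(multiplicity 2 a + 1)"
    by (rule le_imp_power_dvd) simp
  ultimately show ?thesis by (rule dvd_trans[rotated])
qed

theorem lemma4p2:
  fixes k N a :: nat
  assumes "k \<ge> 1" and "N \<ge> 3" and "a \<ge> 2"
  shows
    "(even a \<longrightarrow>
        [int (dfact (k * 2^N + 2*a - 3) div dfact (k * 2^N + 1)) = int (dfact (2*a - 3))]
          (mod 2 ^ (N + 1 + min (multiplicity (2::nat) a) (N - 1)))) \<and>
     (odd a \<longrightarrow>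
        [int (dfact (k * 2^N + 2*a - 3) div dfact (k * 2^N + 1)) = int (dfact (2*a - 3)) + int k * 2^N]
          (mod 2 ^ (N + 1))) \<and>
    (even a \<longrightarrow>
        [int (dfact (k * 2^N + 2*a - 3)) = int (dfact (2*a - 3))] (mod 2 ^ (N + 1))) \<and>
     (odd a \<longrightarrow>
        [int (dfact (k * 2^N + 2*a - 3)) = int (dfact (2*a - 3)) + int k * 2^N] (mod 2 ^ (N + 1))) \<and>
    (odd k \<longrightarrow>
       ((N = 3 \<longrightarrow>
          [int (dfact (k * 2^N - 3)) = -1 + (-1) ^ ((k - 1) div 2) * 2 ^ (N + 1)] (mod 2 ^ (N + 3))) \<and>
        (N \<ge> 4 \<longrightarrow>
          [int (dfact (k * 2^N - 3)) = -1 + (-1) ^ ((k + 1) div 2) * 2 ^ (N + 1)] (mod 2 ^ (N + 3))) \<and>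
        [int (dfact (k * 2^N - 3)) = -1 + 2 ^ (N + 1)] (mod 2 ^ (N + 2))))"
proof -
  define H where "H = (2::nat)^(N-1)"
  obtain n where n: "N = n + 3" using assms(2) by (metis add.commute le_Suc_ex)
  have H2: "(2::nat)^N = 2*H" unfolding H_def n by (simp add: power_add)
  have Hge: "H \<ge> 4" unfolding H_def n by (simp add: power_add)
  have kH: "k*H \<ge> 4" using Hge assms(1) by (metis dual_order.trans mult_le_mono1 mult_1)
  define M :: int where "M = 2 * int (k*H)"
  define P2 :: int where "P2 = 2^N"
  have MP: "M = int k * P2" unfolding M_def P2_def using H2 by (metis mult.left_commute of_nat_mult of_nat_numeral of_nat_power)
  have PH: "P2 = 2 * int H"
  proof -
    have "int (2^N) = int (2*H)" using H2 by simp
    then show ?thesis unfolding P2_def by simp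
  qed
  define c where "c = cc N"
  have D: "[R 0 (k*H) = 1 + int k * c * P2] (mod 8*P2)"
    using D_N[OF assms(2), of k] unfolding H_def c_def P2_def by (simp add: power_add mult.commute)
  have t1: "k * 2^N + 2*a - 3 = 2*(k*H + (a-2)) + 1" using H2 assms(3) by simp
  have t2: "k * 2^N + 1 = 2*(k*H) + 1" using H2 by simp
  have t3: "2*a - 3 = 2*(a-2) + 1" using assms(3) by simp
  have t4: "k * 2^N - 3 = 2*(k*H - 2) + 1" using H2 kH by simp
  have Dsmall: "int (dfact (k * 2^N + 1)) = R 0 (k*H) * (M + 1)"
    unfolding t2 dfact_R R_Suc M_def by simp
  have Dbig: "int (dfact (k * 2^N + 2*a - 3)) = int (dfact (k * 2^N + 1)) * R (M + 2) (a-2)"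
  proof -
    have "int (dfact (k * 2^N + 2*a - 3)) = R 0 (Suc (k*H) + (a-2))" unfolding t1 dfact_R by simp
    also have "\<dots> = R 0 (Suc (k*H)) * R (M+2) (a-2)" unfolding R_add M_def by (simp add: algebra_simps)
    also have "R 0 (Suc (k*H)) = int (dfact (k * 2^N + 1))" unfolding t2 dfact_R by simp
    finally show ?thesis .
  qed
  have Pdef: "int (dfact (2*a - 3)) = R 2 (a-2)"
  proof -
    have "int (dfact (2*a - 3)) = R 0 (1 + (a-2))" unfolding t3 dfact_R by simp
    also have "\<dots> = R 2 (a-2)" unfolding R_add by (simp add: R_Suc)
    finally show ?thesis .
  qed
  have Qdef: "int (dfact (k * 2^N + 2*a - 3) div dfact (k * 2^N + 1)) = R (M + 2) (a-2)"
  proof -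
    have pos: "int (dfact (k * 2^N + 1)) > 0" using dfact_pos by simp
    have "int (dfact (k * 2^N + 2*a - 3) div dfact (k * 2^N + 1)) = int (dfact (k * 2^N + 2*a - 3)) div int (dfact (k * 2^N + 1))"
      by (simp add: zdiv_int)
    also have "\<dots> = R (M + 2) (a-2)" unfolding Dbig using pos by simp
    finally show ?thesis .
  qed
  have e1: "(2::int)^(N+1) = 2*P2" "(2::int)^(N+2) = 4*P2" "(2::int)^(N+3) = 8*P2"
    unfolding P2_def by (simp_all add: power_add)
  have P2n: "P2 = 8 * 2^n" unfolding P2_def n by (simp add: power_add)
  have "odd c" using cc_odd[of N] unfolding c_def .
  then obtain r where r: "c = 2*r + 1" by (elim oddE)
  have Dsm1: "[int (dfact (k * 2^N + 1)) = 1] (mod 2*P2)"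
  proof -
    have d2: "[R 0 (k*H) = 1 + int k * c * P2] (mod 2*P2)"
    proof -
      have "2*P2 dvd 8*P2" by (rule mult_dvd_mono) simp_all
      then show ?thesis using D cong_dvd_modulus by blast
    qed
    then have "[R 0 (k*H) * (M + 1) = (1 + int k * c * P2) * (M+1)] (mod 2*P2)"
      by (rule cong_scalar_right)
    moreover have "(1 + int k * c * P2) * (M+1) - 1 = 2*P2 * (int k * (r+1) + int k * int k * c * 4 * 2^n)"
      unfolding MP r by (simp add: algebra_simps P2n)
    then have "[(1 + int k * c * P2) * (M+1) = 1] (mod 2*P2)" unfolding cong_iff_dvd_diff by simp
    ultimately show ?thesis unfolding Dsmall using cong_trans by blast
  qed
  have part_i_even: "even a \<longrightarrow>
        [int (dfact (k * 2^N + 2*a - 3) div dfact (k * 2^N + 1)) = int (dfact (2*a - 3))]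
          (mod 2 ^ (N + 1 + min (multiplicity (2::nat) a) (N - 1)))"
  proof
    assume "even a"
    then have "even (a-2)" using assms(3) by simp
    then obtain b where b: "a - 2 = 2*b" by (elim evenE)
    have ia: "int a = 2*int b + 2" using b assms(3) by linarith
    have meq: "M * (M + 2*2 + 4*int b) = M * (M + 2 * int a)" by (simp add: ia algebra_simps)
    have c0: "[R (2 + M) (2*b) = R 2 (2*b)] (mod M * (M + 2 * int a))"
      using R_pair[of 2 M b] unfolding meq .
    have "R (M+2) (a-2) = R (2 + M) (2*b)" "R 2 (a-2) = R 2 (2*b)" by (simp_all add: b add.commute)
    with c0 have c1: "[R (M + 2) (a-2) = R 2 (a-2)] (mod M * (M + 2 * int a))" by simp
    define m where "m = min (multiplicity (2::nat) a) (N - 1)"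
    have "(2::int)^(m+1) dvd 2 * int a" unfolding m_def using multi_dvd assms by simp
    moreover have "(2::int)^(m+1) dvd M" unfolding MP P2_def m_def 
      by (rule dvd_mult, rule le_imp_power_dvd) (use assms in simp)
    ultimately have "(2::int)^(m+1) dvd M + 2 * int a" by simp
    moreover have "(2::int)^N dvd M" unfolding MP P2_def by simp
    ultimately have "(2::int)^N * 2^(m+1) dvd M * (M + 2 * int a)" by (simp add: mult_dvd_mono)
    then have "(2::int)^(N + 1 + m) dvd M * (M + 2 * int a)" by (simp add: power_add mult_ac)
    then show "[int (dfact (k * 2^N + 2*a - 3) div dfact (k * 2^N + 1)) = int (dfact (2*a - 3))]
          (mod 2 ^ (N + 1 + min (multiplicity (2::nat) a) (N - 1)))"
      unfolding Qdef Pdef m_def[symmetric] using c1 cong_dvd_modulus by blast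
  qed
  have part_i_odd: "odd a \<longrightarrow>
        [int (dfact (k * 2^N + 2*a - 3) div dfact (k * 2^N + 1)) = int (dfact (2*a - 3)) + int k * 2^N]
          (mod 2 ^ (N + 1))"
  proof
    assume "odd a"
    then have "odd (a-2)" using assms(3) by simp
    then obtain b where b0: "a - 2 = 2*b + 1" by (elim oddE)
    then have b: "a - 2 = Suc (2*b)" by simp
    have "[R (2 + M) (2*b) = R 2 (2*b)] (mod M * (M + 2*2 + 4*int b))" by (rule R_pair)
    moreover have "M * (M + 2*2 + 4*int b) = 2*P2 * (int k * (int (k*H) + 2 + 2 * int b))"
      unfolding MP using PH by (simp add: algebra_simps)
    ultimately have c0: "[R (2 + M) (2*b) = R 2 (2*b)] (mod 2*P2 * (int k * (int (k*H) + 2 + 2 * int b)))" by simp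
    have c1: "[R (2 + M) (2*b) = R 2 (2*b)] (mod 2*P2)" by (rule cong_dvd_modulus[OF c0]) (rule dvd_triv_left)
    have Q: "R (M + 2) (a-2) = R (2 + M) (2*b) * (M + 4*int b + 3)" unfolding b R_Suc by (simp add: algebra_simps)
    have P: "R 2 (a-2) = R 2 (2*b) * (4*int b + 3)" unfolding b R_Suc by (simp add: algebra_simps)
    have c2: "[R (M + 2) (a-2) = R 2 (2*b) * (M + 4*int b + 3)] (mod 2*P2)"
      unfolding Q by (rule cong_scalar_right[OF c1])
    have "odd (R 2 (2*b))" by (rule R_odd) simp
    then obtain q where q: "R 2 (2*b) = 2*q+1" by (elim oddE)
    have "R 2 (2*b) * (M + 4*int b + 3) - (R 2 (a-2) + int k * P2) = 2*P2 * (q * int k)"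
      unfolding P q MP by (simp add: algebra_simps)
    then have "[R 2 (2*b) * (M + 4*int b + 3) = R 2 (a-2) + int k * P2] (mod 2*P2)"
      unfolding cong_iff_dvd_diff by simp
    with c2 show "[int (dfact (k * 2^N + 2*a - 3) div dfact (k * 2^N + 1)) = int (dfact (2*a - 3)) + int k * 2^N]
          (mod 2 ^ (N + 1))" unfolding Qdef Pdef e1 P2_def[symmetric] using cong_trans by blast
  qed
  have part_ii_even: "even a \<longrightarrow>
        [int (dfact (k * 2^N + 2*a - 3)) = int (dfact (2*a - 3))] (mod 2 ^ (N + 1))"
  proof
    assume ev: "even a"
    have "[R (M + 2) (a-2) = int (dfact (2*a - 3))] (mod 2 ^ (N + 1))"
    proof -
      have "(2::int)^(N+1) dvd 2^(N + 1 + min (multiplicity (2::nat) a) (N - 1))" by (rule le_imp_power_dvd) simp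
      then show ?thesis using part_i_even ev cong_dvd_modulus unfolding Qdef by blast
    qed
    then have "[int (dfact (k * 2^N + 1)) * R (M + 2) (a-2) = 1 * int (dfact (2*a - 3))] (mod 2 ^ (N + 1))"
      using Dsm1 unfolding e1 by (intro cong_mult) auto
    then show "[int (dfact (k * 2^N + 2*a - 3)) = int (dfact (2*a - 3))] (mod 2 ^ (N + 1))"
      unfolding Dbig by simp
  qed
  have part_ii_odd: "odd a \<longrightarrow>
        [int (dfact (k * 2^N + 2*a - 3)) = int (dfact (2*a - 3)) + int k * 2^N] (mod 2 ^ (N + 1))"
  proof
    assume od: "odd a"
    have "[R (M + 2) (a-2) = int (dfact (2*a - 3)) + int k * 2^N] (mod 2 ^ (N + 1))"
      using part_i_odd od unfolding Qdef by blast
    then have "[int (dfact (k * 2^N + 1)) * R (M + 2) (a-2) = 1 * (int (dfact (2*a - 3)) + int k * 2^N)] (mod 2 ^ (N + 1))"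
      using Dsm1 unfolding e1 by (intro cong_mult) auto
    then show "[int (dfact (k * 2^N + 2*a - 3)) = int (dfact (2*a - 3)) + int k * 2^N] (mod 2 ^ (N + 1))"
      unfolding Dbig by simp
  qed
  have part_iii: "odd k \<longrightarrow>
       ((N = 3 \<longrightarrow>
          [int (dfact (k * 2^N - 3)) = -1 + (-1) ^ ((k - 1) div 2) * 2 ^ (N + 1)] (mod 2 ^ (N + 3))) \<and>
        (N \<ge> 4 \<longrightarrow>
          [int (dfact (k * 2^N - 3)) = -1 + (-1) ^ ((k + 1) div 2) * 2 ^ (N + 1)] (mod 2 ^ (N + 3))) \<and>
        [int (dfact (k * 2^N - 3)) = -1 + 2 ^ (N + 1)] (mod 2 ^ (N + 2)))"
  proof
    assume "odd k"
    then obtain j where j: "k = 2*j+1" by (elim oddE)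
    obtain u where u: "k*H = u + 2" using kH by (intro that[of "k*H - 2"]) simp
    have t4': "k * 2^N - 3 = 2*u + 1" using H2 u by simp
    define X where "X = int (dfact (k * 2^N - 3))"
    have Xd: "X = R 0 (Suc u)" unfolding X_def t4' dfact_R ..
    have Mu: "M = 2 * int u + 4" unfolding M_def u by simp
    have XR: "R 0 (k*H) = X * (M - 1)" unfolding u Xd Mu 
      by (simp add: R_Suc[of 0 "Suc u"] algebra_simps)
    define X0 where "X0 = -1 - (c+1) * int k * P2"
    have c1: "[X * (M - 1) = 1 + int k * c * P2] (mod 8*P2)" using D unfolding XR .
    have "X0 * (M - 1) - (1 + int k * c * P2) = 8*P2 * (- (c+1) * int k * int k * 2^n)"
      unfolding X0_def MP by (simp add: algebra_simps P2n)
    then have c2: "[X0 * (M - 1) = 1 + int k * c * P2] (mod 8*P2)" unfolding cong_iff_dvd_diff by simp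
    have c3: "[X * (M - 1) = X0 * (M - 1)] (mod 8*P2)" using c1 c2 cong_sym cong_trans by blast
    have "odd (M - 1)" unfolding M_def by simp
    then have cop: "coprime (M - 1) (8*P2)" unfolding e1(3)[symmetric] by simp
    have XX: "[X = X0] (mod 8*P2)" using c3 cong_mult_rcancel[OF cop] by blast
    have A: "N = 3 \<longrightarrow> [X = -1 + (-1) ^ ((k - 1) div 2) * 2 ^ (N + 1)] (mod 2 ^ (N + 3))"
    proof
      assume N3: "N = 3"
      have cN: "c = 5" unfolding c_def cc_def using N3 by simp
      have P8: "P2 = 8" unfolding P2_def N3 by simp
      have kd: "(k - 1) div 2 = j" unfolding j by simp
      have "[X0 = -1 + (-1) ^ j * 16] (mod 64)"
      proof (cases "even j")
        case True
        then obtain i where i: "j = 2*i" by (elim evenE)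
        have "X0 - (-1 + (-1) ^ j * 16) = 64 * (- 3 * int i - 1)"
          unfolding X0_def cN P8 j i by (simp add: algebra_simps)
        then show ?thesis unfolding cong_iff_dvd_diff by (metis dvd_triv_left)
      next
        case False
        then obtain i where i: "j = 2*i+1" by (elim oddE)
        have "X0 - (-1 + (-1) ^ j * 16) = 64 * (- 3 * int i - 2)"
          unfolding X0_def cN P8 j i by (simp add: algebra_simps)
        then show ?thesis unfolding cong_iff_dvd_diff by (metis dvd_triv_left)
      qed
      then show "[X = -1 + (-1) ^ ((k - 1) div 2) * 2 ^ (N + 1)] (mod 2 ^ (N + 3))"
        using XX unfolding kd N3 P8 by (simp add: cong_trans)
    qed
    have B: "N \<ge> 4 \<longrightarrow> [X = -1 + (-1) ^ ((k + 1) div 2) * 2 ^ (N + 1)] (mod 2 ^ (N + 3))"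
    proof
      assume N4: "N \<ge> 4"
      have cN: "c = 1" unfolding c_def cc_def using N4 by simp
      have kd: "(k + 1) div 2 = j + 1" unfolding j by simp
      have "[X0 = -1 + (-1) ^ (j+1) * (2*P2)] (mod 8*P2)"
      proof (cases "even j")
        case True
        then obtain i where i: "j = 2*i" by (elim evenE)
        have "X0 - (-1 + (-1) ^ (j+1) * (2*P2)) = 8*P2 * (- int i)"
          unfolding X0_def cN j i by (simp add: algebra_simps)
        then show ?thesis unfolding cong_iff_dvd_diff by (metis dvd_triv_left)
      next
        case False
        then obtain i where i: "j = 2*i+1" by (elim oddE)
        have "X0 - (-1 + (-1) ^ (j+1) * (2*P2)) = 8*P2 * (- int i - 1)"
          unfolding X0_def cN j i by (simp add: algebra_simps)
        then show ?thesis unfolding cong_iff_dvd_diff by (metis dvd_triv_left)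
      qed
      then show "[X = -1 + (-1) ^ ((k + 1) div 2) * 2 ^ (N + 1)] (mod 2 ^ (N + 3))"
        using XX unfolding kd e1 by (metis cong_trans)
    qed
    have C: "[X = -1 + 2 ^ (N + 1)] (mod 2 ^ (N + 2))"
    proof -
      have "X0 - (-1 + 2*P2) = 4*P2 * (if N = 3 then - 3 * int j - 2 else - int j - 1)"
        unfolding X0_def c_def cc_def j by (simp add: algebra_simps)
      then have "[X0 = -1 + 2*P2] (mod 4*P2)" unfolding cong_iff_dvd_diff by (metis dvd_triv_left)
      moreover have "[X = X0] (mod 4*P2)" by (rule cong_dvd_modulus[OF XX]) (rule mult_dvd_mono, simp_all)
      ultimately show ?thesis unfolding e1 using cong_trans by blast
    qed
    show "(N = 3 \<longrightarrow>
          [int (dfact (k * 2^N - 3)) = -1 + (-1) ^ ((k - 1) div 2) * 2 ^ (N + 1)] (mod 2 ^ (N + 3))) \<and>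
        (N \<ge> 4 \<longrightarrow>
          [int (dfact (k * 2^N - 3)) = -1 + (-1) ^ ((k + 1) div 2) * 2 ^ (N + 1)] (mod 2 ^ (N + 3))) \<and>
        [int (dfact (k * 2^N - 3)) = -1 + 2 ^ (N + 1)] (mod 2 ^ (N + 2))"
      using A B C unfolding X_def by blast
  qed
  show ?thesis using part_i_even part_i_odd part_ii_even part_ii_odd part_iii by blast
qed

end
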